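(* For every integer $\alpha$ and $m$, \[ \langle W_{m+3}\rangle^{{\rm SU}(3)_{-4}}(x;q)=\begin{cases}\dfrac{q^{m/4}}{1+q^{m/4}+q^{-m/4}}\langle W_m\rangle^{{\rm SU}(3)_{-4}}(x;q),& m=4\alpha,\\ (1+q^{\frac{m+3}{4}}+q^{\frac{2m+6}{4}})\langle W_m\rangle^{{\rm SU}(3)_{-4}}(x;q),& m=4\alpha+1,\\ -q^{\frac{3m+6}{4}}\langle W_m\rangle^{{\rm SU}(3)_{-4}}(x;q),& m=4\alpha+2,\\ -q^{\frac{3m+3}{4}}\langle W_m\rangle^{{\rm SU}(3)_{-4}}(x;q),& m=4\alpha+3.\end{cases} \]
   Context: Let $|q|<1$, $x$ a nonzero parameter, $(a;q)_\infty=\prod_{k\ge0}(1-aq^k)$. Let $s_1,s_2$ be variables and $s_3:=(s_1s_2)^{-1}$. For $m\in\mathbb{Z}$ define \[ \langle W_m\rangle^{{\rm SU}(3)_{-4}}(x;q):=\frac{(q;q)_\infty^{2}}{3!}\oint\frac{ds_1}{2\pi i s_1}\frac{ds_2}{2\pi i s_2}\prod_{\substack{i,j=1\\ i\ne j}}^3(s_is_j^{-1};q)_\infty\prod_{i=1}^3(q^{1/2}s_ix;q)_\infty(q^{1/2}s_i^{-1}x^{-1};q)_\infty\sum_{i=1}^3 s_i^m, \] where the integral denotes the constant term in $s_1,s_2$ of the integrand expanded as a formal Laurent series (equivalently the contour integral over unit circles). *)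

theory Defs
  imports "HOL-Complex_Analysis.Complex_Analysis"
begin

definition qpoch :: "complex \<Rightarrow> complex \<Rightarrow> complex" where
  "qpoch a q = (\<Prod>k. 1 - a * q ^ k)"

definition svar :: "complex \<Rightarrow> complex \<Rightarrow> nat \<Rightarrow> complex" where
  "svar s1 s2 i = (if i = 0 then s1 else if i = 1 then s2 else inverse (s1 * s2))"

text \<open>Integrand of the SU(3)_{-4} Wilson line index (without the measure ds/(2 pi i s)).
  q^(1/2) is taken to be csqrt q.\<close>
definition su3_integrand :: "int \<Rightarrow> complex \<Rightarrow> complex \<Rightarrow> complex \<Rightarrow> complex \<Rightarrow> complex" where
  "su3_integrand m x q s1 s2 =
     (let s = svar s1 s2 in
       (\<Prod>i<3. \<Prod>j\<in>{..<3} - {i}. qpoch (s i / s j) q) *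
       (\<Prod>i<3. qpoch (csqrt q * s i * x) q * qpoch (csqrt q * inverse (s i) * inverse x) q) *
       (\<Sum>i<3. s i powi m))"

definition W_SU3 :: "int \<Rightarrow> complex \<Rightarrow> complex \<Rightarrow> complex" where
  "W_SU3 m x q =
     (qpoch q q)\<^sup>2 / fact 3 *
     contour_integral (circlepath 0 1)
       (\<lambda>s1. contour_integral (circlepath 0 1)
          (\<lambda>s2. su3_integrand m x q s1 s2 / (2 * pi * \<i> * s2)) / (2 * pi * \<i> * s1))"

end

theory Submission
  imports Defs
begin

lemma qpoch_abs_conv:
  fixes a q :: complex assumes "norm q < 1"
  shows "abs_convergent_prod (\<lambda>k. 1 - a * q ^ k)"
proof (rule summable_imp_abs_convergent_prod)
  have "summable (\<lambda>k. norm a * norm q ^ k)"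
    using assms by (intro summable_mult summable_geometric) auto
  thus "summable (\<lambda>k. norm (1 - a * q ^ k - 1))"
    by (simp add: norm_mult norm_power)
qed

lemma qpoch_conv:
  fixes a q :: complex assumes "norm q < 1"
  shows "convergent_prod (\<lambda>k. 1 - a * q ^ k)"
  using qpoch_abs_conv[OF assms] abs_convergent_prod_imp_convergent_prod by blast

lemma qpoch_has_prod:
  fixes a q :: complex assumes "norm q < 1"
  shows "(\<lambda>k. 1 - a * q ^ k) has_prod qpoch a q"
  unfolding qpoch_def using qpoch_conv[OF assms] by (simp add: convergent_prod_has_prod)

lemma qpoch_rec:
  fixes a q :: complex assumes "norm q < 1"
  shows "qpoch a q = (1 - a) * qpoch (a * q) q"
proof -
  have "(\<lambda>n. 1 - a * q ^ Suc n) has_prod qpoch (a * q) q"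
    using qpoch_has_prod[OF assms, of "a * q"] by (simp add: mult.assoc mult.commute mult.left_commute)
  from has_prod_Suc_imp[OF this]
  have "(\<lambda>k. 1 - a * q ^ k) has_prod (qpoch (a * q) q * (1 - a))" by simp
  thus ?thesis using qpoch_has_prod[OF assms, of a] has_prod_unique2 by (metis mult.commute)
qed

lemma qpoch_one: assumes "norm q < 1" shows "qpoch 1 q = 0"
  using qpoch_rec[OF assms, of 1] by simp

lemma qpoch_lim:
  fixes a q :: complex assumes "norm q < 1"
  shows "(\<lambda>n. \<Prod>k<n. 1 - a * q ^ k) \<longlonglongrightarrow> qpoch a q"
proof -
  have "(\<lambda>n. \<Prod>k\<le>n. 1 - a * q ^ k) \<longlonglongrightarrow> qpoch a q"
    unfolding qpoch_def by (rule convergent_prod_LIMSEQ[OF qpoch_conv[OF assms]])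
  thus ?thesis
    using LIMSEQ_lessThan_iff_atMost[of "\<lambda>A. \<Prod>k\<in>A. 1 - a * q ^ k"] by simp
qed

lemma qpoch_unif:
  fixes q :: complex assumes "norm q < 1" and "R > 0"
  shows "uniform_limit (cball 0 R) (\<lambda>n a. \<Prod>k<n. 1 - a * q ^ k) (\<lambda>a. qpoch a q) sequentially"
proof -
  have "uniformly_convergent_on (cball 0 R) (\<lambda>n a. \<Prod>k<n. 1 - a * q ^ k)"
  proof (rule uniformly_convergent_on_prod')
    show "uniformly_convergent_on (cball 0 R) (\<lambda>N a. \<Sum>n<N. norm (1 - a * q ^ n - 1))"
    proof (rule Weierstrass_m_test')
      fix n a assume "a \<in> cball (0::complex) R"
      hence "norm a \<le> R" by simp
      thus "norm (norm (1 - a * q ^ n - 1)) \<le> R * norm q ^ n"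
        by (simp add: norm_mult norm_power mult_right_mono)
    next
      show "summable (\<lambda>n. R * norm q ^ n)"
        using assms by (intro summable_mult summable_geometric) auto
    qed
  next
    fix n show "continuous_on (cball 0 R) (\<lambda>a. 1 - a * q ^ n)"
      by (intro continuous_intros)
  next
    show "compact (cball (0::complex) R)" by simp
  qed
  then obtain g where g: "uniform_limit (cball 0 R) (\<lambda>n a. \<Prod>k<n. 1 - a * q ^ k) g sequentially"
    by (auto simp: uniformly_convergent_on_def)
  have eq: "g a = qpoch a q" if "a \<in> cball 0 R" for a
  proof -
    have "(\<lambda>n. \<Prod>k<n. 1 - a * q ^ k) \<longlonglongrightarrow> g a"
      using tendsto_uniform_limitI[OF g that] .
    thus "g a = qpoch a q" using qpoch_lim[OF assms(1), of a] LIMSEQ_unique by blast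
  qed
  show ?thesis
    using g by (rule uniform_limit_cong[THEN iffD1, rotated 2]) (auto simp: eq)
qed

lemma qpoch_holo_UNIV:
  fixes q :: complex assumes "norm q < 1"
  shows "(\<lambda>a. qpoch a q) holomorphic_on UNIV"
proof (rule holomorphic_uniform_sequence[where f = "\<lambda>n a. \<Prod>k<n. 1 - a * q ^ k"])
  fix z :: complex
  have *: "uniform_limit (cball 0 (norm z + 1)) (\<lambda>n a. \<Prod>k<n. 1 - a * q ^ k) (\<lambda>a. qpoch a q) sequentially"
    by (rule qpoch_unif[OF assms]) (auto intro: add_nonneg_pos)
  hence "uniform_limit (cball z 1) (\<lambda>n a. \<Prod>k<n. 1 - a * q ^ k) (\<lambda>a. qpoch a q) sequentially"
    by (rule uniform_limit_on_subset) (simp add: cball_subset_cball_iff)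
  thus "\<exists>d>0. cball z d \<subseteq> UNIV \<and> uniform_limit (cball z d) (\<lambda>n a. \<Prod>k<n. 1 - a * q ^ k) (\<lambda>a. qpoch a q) sequentially"
    by (intro exI[of _ 1]) auto
qed (auto intro!: holomorphic_intros)

lemma qpoch_holo [holomorphic_intros]:
  fixes q :: complex assumes "norm q < 1" and "f holomorphic_on S"
  shows "(\<lambda>z. qpoch (f z) q) holomorphic_on S"
  using holomorphic_on_compose[OF assms(2) holomorphic_on_subset[OF qpoch_holo_UNIV[OF assms(1)]]]
  by (simp add: o_def)

lemma qpoch_cont [continuous_intros]:
  fixes q :: complex assumes "norm q < 1" and "continuous_on S f"
  shows "continuous_on S (\<lambda>z. qpoch (f z) q)"
proof -
  have "continuous_on UNIV (\<lambda>a. qpoch a q)"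
    using holomorphic_on_imp_continuous_on[OF qpoch_holo_UNIV[OF assms(1)]] .
  from continuous_on_compose[OF assms(2) continuous_on_subset[OF this]] show ?thesis
    by (simp add: o_def)
qed

definition II :: "(complex \<Rightarrow> complex \<Rightarrow> complex) \<Rightarrow> complex" where
  "II G = contour_integral (circlepath 0 1)
       (\<lambda>s1. contour_integral (circlepath 0 1)
          (\<lambda>s2. G s1 s2 / (complex_of_real (2 * pi) * \<i> * s2)) / (complex_of_real (2 * pi) * \<i> * s1))"

definition JJ :: "(complex \<Rightarrow> complex) \<Rightarrow> complex" where
  "JJ g = integral {0..1} (\<lambda>t. g (circlepath 0 1 t))"

lemma circ_nz: "circlepath 0 1 t \<noteq> 0"
  by (simp add: circlepath)

lemma circ_sphere: "circlepath 0 1 t \<in> sphere 0 1"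
  by (simp add: circlepath norm_mult)

lemma circ_int:
  "contour_integral (circlepath 0 1) (\<lambda>z. g z / (complex_of_real (2 * pi) * \<i> * z)) = JJ g"
  unfolding contour_integral_integral JJ_def
proof (rule integral_cong)
  fix t :: real
  have "circlepath 0 1 t = exp (2 * complex_of_real pi * \<i> * complex_of_real t)"
    by (simp add: circlepath)
  moreover have "exp (2 * complex_of_real pi * \<i> * complex_of_real t) \<noteq> 0" by simp
  ultimately show "g (circlepath 0 1 t) / (complex_of_real (2 * pi) * \<i> * circlepath 0 1 t) *
         vector_derivative (circlepath 0 1) (at t) = g (circlepath 0 1 t)"
    by (simp add: vector_derivative_circlepath)
qed

lemma II_real: "II G = JJ (\<lambda>a. JJ (G a))"
  unfolding II_def circ_int ..

lemma II_cong:
  assumes "\<And>a b. a \<in> sphere 0 1 \<Longrightarrow> b \<in> sphere 0 1 \<Longrightarrow> G a b = G' a b"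
  shows "II G = II G'"
  unfolding II_real JJ_def using assms circ_sphere by (intro integral_cong) auto

lemma II_inner:
  assumes "\<And>a. a \<in> sphere 0 1 \<Longrightarrow> JJ (G a) = JJ (G' a)"
  shows "II G = II G'"
  unfolding II_real JJ_def[of "\<lambda>a. JJ (G a)"] JJ_def[of "\<lambda>a. JJ (G' a)"]
  using assms circ_sphere by (intro integral_cong) auto

definition tcont :: "(complex \<Rightarrow> complex \<Rightarrow> complex) \<Rightarrow> bool" where
  "tcont G \<longleftrightarrow> continuous_on (sphere 0 1 \<times> sphere 0 1) (\<lambda>p. G (fst p) (snd p))"

lemma tcont_comp:
  assumes "tcont G"
  shows "continuous_on (cbox (0,0) (1::real,1::real)) (\<lambda>p. G (circlepath 0 1 (fst p)) (circlepath 0 1 (snd p)))"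
proof -
  have c: "continuous_on UNIV (circlepath 0 1)"
    by (simp add: circlepath continuous_intros)
  have "continuous_on (cbox (0,0) (1::real,1::real)) (\<lambda>p. (circlepath 0 1 (fst p), circlepath 0 1 (snd p)))"
  proof (rule continuous_on_Pair)
    show "continuous_on (cbox (0,0) (1::real,1::real)) (\<lambda>p. circlepath 0 1 (fst p))"
      by (rule continuous_on_compose2[OF c continuous_on_fst[OF continuous_on_id]]) auto
    show "continuous_on (cbox (0,0) (1::real,1::real)) (\<lambda>p. circlepath 0 1 (snd p))"
      by (rule continuous_on_compose2[OF c continuous_on_snd[OF continuous_on_id]]) auto
  qed
  moreover have "(\<lambda>p. (circlepath 0 1 (fst p), circlepath 0 1 (snd p))) ` cbox (0,0) (1::real,1::real)
      \<subseteq> sphere 0 1 \<times> sphere 0 1"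
    using circ_sphere by auto
  ultimately show ?thesis
    by (rule continuous_on_compose2[OF assms[unfolded tcont_def], of _ "\<lambda>p. (circlepath 0 1 (fst p), circlepath 0 1 (snd p))", simplified])
qed

lemma II_double:
  assumes "tcont G"
  shows "II G = integral (cbox (0,0) (1::real,1::real)) (\<lambda>p. G (circlepath 0 1 (fst p)) (circlepath 0 1 (snd p)))"
  unfolding II_real JJ_def
  using integral_prod_continuous[OF tcont_comp[OF assms]] by (simp add: cbox_interval)

lemma II_sum:
  assumes "finite I" "\<And>i. i \<in> I \<Longrightarrow> tcont (G i)"
  shows "II (\<lambda>a b. \<Sum>i\<in>I. c i * G i a b) = (\<Sum>i\<in>I. c i * II (G i))"
proof -
  have tc: "tcont (\<lambda>a b. \<Sum>i\<in>I. c i * G i a b)"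
    using assms unfolding tcont_def by (intro continuous_intros) auto
  have int: "(\<lambda>p. G i (circlepath 0 1 (fst p)) (circlepath 0 1 (snd p))) integrable_on cbox (0,0) (1::real,1::real)"
    if "i \<in> I" for i
    using integrable_continuous[OF tcont_comp[OF assms(2)[OF that]]] .
  have "II (\<lambda>a b. \<Sum>i\<in>I. c i * G i a b) = (\<Sum>i\<in>I. integral (cbox (0,0) (1::real,1::real))
      (\<lambda>p. c i * G i (circlepath 0 1 (fst p)) (circlepath 0 1 (snd p))))"
    unfolding II_double[OF tc] using int assms(1)
    by (subst integral_sum) (auto intro!: integrable_on_mult_right)
  also have "\<dots> = (\<Sum>i\<in>I. c i * II (G i))"
    by (intro sum.cong refl) (simp add: II_double[OF assms(2)])
  finally show ?thesis .
qed

lemma II_swap: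
  assumes "tcont G"
  shows "II (\<lambda>a b. G b a) = II G"
proof -
  have "continuous_on (cbox (0,0) (1::real,1::real)) (\<lambda>(x,y). G (circlepath 0 1 x) (circlepath 0 1 y))"
    using tcont_comp[OF assms] by (simp add: case_prod_unfold)
  from integral_swap_continuous[OF this] show ?thesis
    unfolding II_real JJ_def by (simp add: cbox_interval)
qed

lemma JJ_inv: "JJ (\<lambda>z. g (inverse z)) = JJ g"
proof -
  have e: "inverse (circlepath 0 1 t) = circlepath 0 1 (1 + - t)" for t
  proof -
    have "circlepath 0 1 (1 + - t) = exp (2 * complex_of_real pi * \<i> + (- (2 * complex_of_real pi * \<i> * complex_of_real t)))"
      by (simp add: circlepath algebra_simps)
    also have "\<dots> = exp (2 * complex_of_real pi * \<i>) * exp (- (2 * complex_of_real pi * \<i> * complex_of_real t))"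
      by (rule exp_add)
    also have "\<dots> = inverse (circlepath 0 1 t)"
      by (simp add: circlepath exp_minus)
    finally show ?thesis by simp
  qed
  have "JJ (\<lambda>z. g (inverse z)) = integral {- 0..- (-1)} (\<lambda>t. (\<lambda>y. g (circlepath 0 1 (1 + y))) (- t))"
    unfolding JJ_def e by simp
  also have "\<dots> = integral {-1..0} (\<lambda>y. g (circlepath 0 1 (1 + y)))"
    by (rule Henstock_Kurzweil_Integration.integral_reflect_real[of 0 "-1" "\<lambda>y. g (circlepath 0 1 (1 + y))"])
  also have "\<dots> = integral {-1..0} ((\<lambda>y. g (circlepath 0 1 y)) \<circ> (+) 1)"
    by (simp add: o_def)
  also have "\<dots> = JJ g" unfolding JJ_def integral_shift_Icc_real by simp
  finally show ?thesis .
qed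

definition cpath :: "complex \<Rightarrow> real \<Rightarrow> complex" where
  "cpath c = (\<lambda>t. c * circlepath 0 1 t)"

lemma cpath_valid: "valid_path (cpath c)"
proof -
  have "valid_path ((\<lambda>z. c * z) \<circ> circlepath 0 1)"
    by (rule valid_path_compose_holomorphic[of _ _ UNIV]) (auto intro!: holomorphic_intros)
  thus ?thesis by (simp add: cpath_def o_def)
qed

lemma cpath_path: "path (cpath c)"
  using cpath_valid valid_path_imp_path by blast

lemma cpath_loop: "pathfinish (cpath c) = pathstart (cpath c)"
  by (simp add: cpath_def pathfinish_def pathstart_def circlepath)

lemma cpath_int:
  assumes "c \<noteq> 0"
  shows "contour_integral (cpath c) (\<lambda>z. g z / z) = complex_of_real (2 * pi) * \<i> * JJ (\<lambda>z. g (c * z))"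
proof -
  have vd: "vector_derivative (cpath c) (at t) = c * (complex_of_real (2 * pi) * \<i> * complex_of_real 1 *
      exp (2 * complex_of_real pi * \<i> * complex_of_real t))" for t
    unfolding cpath_def
    by (rule vector_derivative_at, rule has_vector_derivative_mult_right, rule has_vector_derivative_circlepath)
  have "contour_integral (cpath c) (\<lambda>z. g z / z) = integral {0..1} (\<lambda>t. complex_of_real (2 * pi) * \<i> * g (c * circlepath 0 1 t))"
    unfolding contour_integral_integral
  proof (rule integral_cong)
    fix t :: real
    show "g (cpath c t) / cpath c t * vector_derivative (cpath c) (at t) =
          complex_of_real (2 * pi) * \<i> * g (c * circlepath 0 1 t)"
      unfolding vd using assms by (simp add: cpath_def circlepath)
  qed
  also have "\<dots> = complex_of_real (2 * pi) * \<i> * JJ (\<lambda>z. g (c * z))"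
    unfolding JJ_def by (rule integral_mult_right)
  finally show ?thesis .
qed

lemma JJ_scale_good:
  assumes hol: "g holomorphic_on (- {0})" and c: "Im c \<noteq> 0 \<or> 0 < Re c"
  shows "JJ (\<lambda>z. g (c * z)) = JJ g"
proof -
  have c0: "c \<noteq> 0" using c by auto
  have hom: "homotopic_loops (- {0}) (cpath c) (cpath 1)"
  proof (rule homotopic_loops_linear[OF cpath_path cpath_path cpath_loop cpath_loop])
    fix t :: real assume "t \<in> {0..1}"
    show "closed_segment (cpath c t) (cpath 1 t) \<subseteq> - {0}"
    proof
      fix w assume "w \<in> closed_segment (cpath c t) (cpath 1 t)"
      then obtain u :: real where u: "0 \<le> u" "u \<le> 1" "w = (1 - u) *\<^sub>R cpath c t + u *\<^sub>R cpath 1 t"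
        unfolding closed_segment_def by auto
      have w: "w = circlepath 0 1 t * ((1 - u) * c + u)"
        using u(3) by (simp add: cpath_def scaleR_conv_of_real algebra_simps)
      have "(1 - u) * c + u \<noteq> 0"
      proof
        assume h: "(1 - u) * c + u = 0"
        have im: "(1 - u) * Im c = 0" using arg_cong[OF h, of Im] by simp
        have re: "(1 - u) * Re c + u = 0" using arg_cong[OF h, of Re] by simp
        show False
        proof (cases "u = 1")
          case True thus False using re by simp
        next
          case False
          hence "1 - u > 0" using u by auto
          hence "Im c = 0" using im by simp
          hence "0 < Re c" using c by simp
          hence "(1 - u) * Re c > 0" using \<open>1 - u > 0\<close> by simp
          thus False using re u by linarith
        qed
      qed
      thus "w \<in> - {0}" using w circ_nz by simp
    qed
  qed
  have "contour_integral (cpath c) (\<lambda>z. g z / z) = contour_integral (cpath 1) (\<lambda>z. g z / z)"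
    by (rule Cauchy_theorem_homotopic_loops[OF hom])
       (auto intro!: holomorphic_intros holomorphic_on_subset[OF hol] simp: cpath_valid)
  thus ?thesis using cpath_int[OF c0, of g] cpath_int[of 1 g] by simp
qed

lemma JJ_scale:
  assumes hol: "g holomorphic_on (- {0})" and c0: "c \<noteq> 0"
  shows "JJ (\<lambda>z. g (c * z)) = JJ g"
proof (cases "Im c \<noteq> 0 \<or> 0 < Re c")
  case True thus ?thesis using JJ_scale_good[OF hol] by blast
next
  case False
  hence im: "Im c = 0" and re: "Re c < 0" using c0 complex_eq_iff by auto
  have "(g \<circ> (\<lambda>z. \<i> * z)) holomorphic_on (- {0})"
    by (rule holomorphic_on_compose_gen[OF _ hol]) (auto intro!: holomorphic_intros)
  hence hol2: "(\<lambda>z. g (\<i> * z)) holomorphic_on (- {0})" by (simp add: o_def)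
  have "JJ (\<lambda>z. g (c * z)) = JJ (\<lambda>z. (\<lambda>w. g (\<i> * w)) ((- \<i> * c) * z))"
    by (simp add: mult.assoc[symmetric])
  also have "\<dots> = JJ (\<lambda>w. g (\<i> * w))"
    by (rule JJ_scale_good[OF hol2]) (use re in simp)
  also have "\<dots> = JJ g"
    by (rule JJ_scale_good[OF hol]) simp
  finally show ?thesis .
qed

lemma II_scale:
  assumes "\<And>a. a \<in> sphere 0 1 \<Longrightarrow> G a holomorphic_on (- {0})" and "c \<noteq> 0"
  shows "II (\<lambda>a b. G a (c * b)) = II G"
  by (rule II_inner) (use JJ_scale assms in blast)

lemma II_inv23:
  assumes "\<And>a. a \<in> sphere 0 1 \<Longrightarrow> G a holomorphic_on (- {0})"
  shows "II (\<lambda>a b. G a (inverse (a * b))) = II G"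
proof (rule II_inner)
  fix a :: complex assume a: "a \<in> sphere 0 1"
  hence a0: "a \<noteq> 0" by auto
  have "JJ (\<lambda>b. G a (inverse (a * b))) = JJ (\<lambda>b. (\<lambda>w. G a (inverse a * w)) (inverse b))"
    by (simp add: mult.commute)
  also have "\<dots> = JJ (\<lambda>w. G a (inverse a * w))" by (rule JJ_inv)
  also have "\<dots> = JJ (G a)" by (rule JJ_scale[OF assms[OF a]]) (use a0 in simp)
  finally show "JJ (\<lambda>b. G a (inverse (a * b))) = JJ (G a)" .
qed

definition th :: "complex \<Rightarrow> complex \<Rightarrow> complex" where
  "th q z = qpoch z q * qpoch (q / z) q"

context
  fixes q :: complex
  assumes q1: "norm q < 1" and q0: "q \<noteq> 0"
begin

lemma th_shift: assumes "z \<noteq> 0" shows "th q (q * z) = - th q z / z"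
proof -
  have a: "qpoch z q = (1 - z) * qpoch (z * q) q" by (rule qpoch_rec[OF q1])
  have b: "qpoch (inverse z) q = (1 - inverse z) * qpoch (q / z) q"
    using qpoch_rec[OF q1, of "inverse z"] by (simp add: field_simps)
  have c: "q / (q * z) = inverse z" using q0 by (simp add: field_simps)
  show ?thesis unfolding th_def c b a using assms
    by (simp add: field_simps mult.commute)
qed

lemma th_inv: assumes "z \<noteq> 0" shows "th q (inverse z) = - th q z / z"
proof -
  have a: "qpoch z q = (1 - z) * qpoch (z * q) q" by (rule qpoch_rec[OF q1])
  have b: "qpoch (inverse z) q = (1 - inverse z) * qpoch (q / z) q"
    using qpoch_rec[OF q1, of "inverse z"] by (simp add: field_simps)
  have c: "q / inverse z = z * q" using q0 by (simp add: field_simps)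
  show ?thesis unfolding th_def c b a using assms
    by (simp add: field_simps mult.commute)
qed

lemma th_div: assumes "z \<noteq> 0" shows "th q (z / q) = - (z / q) * th q z"
  using th_shift[of "z / q"] assms q0 by (simp add: field_simps)

lemma th_shift2: assumes "z \<noteq> 0" shows "th q (q * (q * z)) = th q z / (q * z^2)"
  using th_shift[of "q * z"] th_shift[of z] assms q0 by (simp add: field_simps power2_eq_square)

end

definition TT :: "complex \<Rightarrow> complex \<Rightarrow> complex \<Rightarrow> complex \<Rightarrow> complex" where
  "TT q x s1 s2 = th q (s1 / s2) * th q (s1 * (s1 * s2)) * th q (s2 * (s1 * s2)) *
      th q (csqrt q * s1 * x) * th q (csqrt q * s2 * x) * th q (csqrt q * inverse (s1 * s2) * x) / (s1^2 * s2)"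

context
  fixes q x :: complex
  assumes q1: "norm q < 1" and q0: "q \<noteq> 0" and x0: "x \<noteq> 0"
begin

lemma TT_swap12:
  assumes "s1 \<noteq> 0" "s2 \<noteq> 0"
  shows "TT q x s2 s1 = - TT q x s1 s2"
proof -
  have e: "th q (s2 / s1) = - th q (s1 / s2) / (s1 / s2)"
    using th_inv[OF q1 q0, of "s1 / s2"] assms by (simp add: field_simps)
  show ?thesis unfolding TT_def e using assms
    by (simp add: field_simps power2_eq_square)
qed

lemma TT_swap23:
  assumes "s1 \<noteq> 0" "s2 \<noteq> 0"
  shows "TT q x s1 (inverse (s1 * s2)) = - TT q x s1 s2"
proof -
  have e1: "s1 / inverse (s1 * s2) = s1 * (s1 * s2)" by (simp add: field_simps)
  have e2: "s1 * (s1 * inverse (s1 * s2)) = s1 / s2" using assms by (simp add: field_simps)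
  have e3: "inverse (s1 * s2) * (s1 * inverse (s1 * s2)) = inverse (s2 * (s1 * s2))"
    using assms by (simp add: field_simps power2_eq_square)
  have e4: "inverse (s1 * inverse (s1 * s2)) = s2" using assms by (simp add: field_simps)
  have e5: "th q (inverse (s2 * (s1 * s2))) = - th q (s2 * (s1 * s2)) / (s2 * (s1 * s2))"
    using th_inv[OF q1 q0, of "s2 * (s1 * s2)"] assms by simp
  show ?thesis unfolding TT_def e1 e2 e3 e4 e5 using assms
    by (simp add: field_simps power2_eq_square)
qed

lemma TT_shift:
  assumes "s1 \<noteq> 0" "s2 \<noteq> 0"
  shows "TT q x s1 (q * s2) = TT q x s1 s2 / (q^4 * s2^8 * s1^4)"
proof -
  define h where "h = csqrt q"
  have h0: "h \<noteq> 0" using q0 by (simp add: h_def)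
  have e1: "s1 / (q * s2) = (s1 / s2) / q" by simp
  have e2: "s1 * (s1 * (q * s2)) = q * (s1 * (s1 * s2))" by (simp add: algebra_simps)
  have e3: "q * s2 * (s1 * (q * s2)) = q * (q * (s2 * (s1 * s2)))" by (simp add: algebra_simps)
  have e4: "h * (q * s2) * x = q * (h * s2 * x)" by (simp add: algebra_simps)
  have e5: "h * inverse (s1 * (q * s2)) * x = (h * inverse (s1 * s2) * x) / q"
    by (simp add: field_simps)
  have nz: "s1 / s2 \<noteq> 0" "s1 * (s1 * s2) \<noteq> 0" "s2 * (s1 * s2) \<noteq> 0" "h * s2 * x \<noteq> 0"
     "h * inverse (s1 * s2) * x \<noteq> 0"
    using assms h0 x0 by auto
  show ?thesis unfolding TT_def h_def[symmetric] e1 e2 e3 e4 e5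
    th_div[OF q1 q0 nz(1)] th_shift[OF q1 q0 nz(2)] th_shift2[OF q1 q0 nz(3)]
    th_shift[OF q1 q0 nz(4)] th_div[OF q1 q0 nz(5)]
    using assms h0 x0 q0 by (simp add: field_simps power2_eq_square eval_nat_numeral)
qed

end

lemma II_cmul: "II (\<lambda>a b. k * F a b) = k * II F"
proof -
  have "JJ (\<lambda>b. k * F a b) = k * JJ (F a)" for a
    unfolding JJ_def by (rule integral_mult_right)
  hence "II (\<lambda>a b. k * F a b) = JJ (\<lambda>a. k * JJ (F a))"
    unfolding II_real by simp
  also have "\<dots> = k * II F" unfolding II_real JJ_def[of "\<lambda>a. k * JJ (F a)"] JJ_def[of "\<lambda>a. JJ (F a)"]
    by (rule integral_mult_right)
  finally show ?thesis .
qed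

lemma II_neg: "II (\<lambda>a b. - F a b) = - II F"
  using II_cmul[of "-1" F] by simp

lemma tcont_add: "tcont F \<Longrightarrow> tcont G \<Longrightarrow> tcont (\<lambda>a b. F a b + G a b)"
  unfolding tcont_def by (intro continuous_intros)

lemma II_add:
  assumes "tcont F" "tcont G"
  shows "II (\<lambda>a b. F a b + G a b) = II F + II G"
proof -
  have tc: "tcont (\<lambda>a b. F a b + G a b)" using tcont_add[OF assms] .
  show ?thesis
    unfolding II_double[OF tc] II_double[OF assms(1)] II_double[OF assms(2)]
    by (rule integral_add) (rule integrable_continuous, rule tcont_comp, fact)+
qed

lemma II_list:
  assumes "\<forall>t\<in>set L. tcont (G t)"
  shows "II (\<lambda>a b. \<Sum>t\<leftarrow>L. G t a b) = (\<Sum>t\<leftarrow>L. II (G t))"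
  using assms
proof (induction L)
  case Nil
  then show ?case using II_cmul[of 0 "\<lambda>a b. 0"] by simp
next
  case (Cons t L)
  have tcL: "tcont (\<lambda>a b. \<Sum>t\<leftarrow>L. G t a b)" using Cons.prems
  proof (induction L)
    case Nil then show ?case by (simp add: tcont_def)
  next
    case (Cons u L) then show ?case using tcont_add[of "G u" "\<lambda>a b. \<Sum>t\<leftarrow>L. G t a b"] by simp
  qed
  have "II (\<lambda>a b. \<Sum>t\<leftarrow>t # L. G t a b) = II (\<lambda>a b. G t a b + (\<Sum>t\<leftarrow>L. G t a b))" by simp
  also have "\<dots> = II (G t) + II (\<lambda>a b. \<Sum>t\<leftarrow>L. G t a b)"
    using II_add[of "G t" "\<lambda>a b. \<Sum>t\<leftarrow>L. G t a b"] Cons.prems tcL by simp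
  also have "\<dots> = (\<Sum>t\<leftarrow>t # L. II (G t))" using Cons by simp
  finally show ?case .
qed

lemma th_cont:
  assumes "norm q < 1" "continuous_on S f" "\<And>z. z \<in> S \<Longrightarrow> f z \<noteq> 0"
  shows "continuous_on S (\<lambda>z. th q (f z))"
  unfolding th_def
  apply (rule continuous_on_mult)
  apply (rule qpoch_cont[OF assms(1,2)])
  apply (rule qpoch_cont[OF assms(1)])
  apply (rule continuous_on_divide[OF continuous_on_const assms(2)])
  using assms(3) by auto

lemma th_holo:
  assumes "norm q < 1" "f holomorphic_on S" "\<And>z. z \<in> S \<Longrightarrow> f z \<noteq> 0"
  shows "(\<lambda>z. th q (f z)) holomorphic_on S"
  unfolding th_def
  apply (rule holomorphic_on_mult)
  apply (rule qpoch_holo[OF assms(1,2)])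
  apply (rule qpoch_holo[OF assms(1)])
  apply (rule holomorphic_on_divide[OF holomorphic_on_const assms(2)])
  using assms(3) by auto

definition mon :: "int \<Rightarrow> int \<Rightarrow> int \<Rightarrow> complex \<Rightarrow> complex \<Rightarrow> complex" where
  "mon a b c s1 s2 = s1 powi a * s2 powi b * inverse (s1 * s2) powi c"

definition BB :: "complex \<Rightarrow> complex \<Rightarrow> int \<Rightarrow> int \<Rightarrow> int \<Rightarrow> complex" where
  "BB q x a b c = II (\<lambda>s1 s2. TT q x s1 s2 * mon a b c s1 s2)"

lemma mon_nf:
  assumes "s1 \<noteq> 0" "s2 \<noteq> 0"
  shows "mon a b c s1 s2 = s1 powi (a - c) * s2 powi (b - c)"
  unfolding mon_def using assms
  by (simp add: power_int_diff power_int_mult_distrib power_int_inverse field_simps)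

context
  fixes q x :: complex
  assumes q1: "norm q < 1" and q0: "q \<noteq> 0" and x0: "x \<noteq> 0"
begin

lemma TTm_tcont: "tcont (\<lambda>s1 s2. TT q x s1 s2 * mon a b c s1 s2)"
  unfolding TT_def tcont_def mon_def using q1 q0 x0
  by (intro continuous_intros th_cont) auto

lemma TTm_holo:
  assumes "s1 \<noteq> 0"
  shows "(\<lambda>s2. TT q x s1 s2 * mon a b c s1 s2) holomorphic_on (- {0})"
  unfolding TT_def mon_def using assms q1 q0 x0
  by (intro holomorphic_intros th_holo) auto

lemma BB_N: "BB q x (a + 1) (b + 1) (c + 1) = BB q x a b c"
  unfolding BB_def
proof (rule II_cong)
  fix s1 s2 :: complex assume "s1 \<in> sphere 0 1" "s2 \<in> sphere 0 1"
  hence "s1 \<noteq> 0" "s2 \<noteq> 0" by auto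
  thus "TT q x s1 s2 * mon (a + 1) (b + 1) (c + 1) s1 s2 = TT q x s1 s2 * mon a b c s1 s2"
    by (simp add: mon_nf)
qed

lemma BB_12: "BB q x a b c = - BB q x b a c"
proof -
  have "BB q x a b c = II (\<lambda>s1 s2. (\<lambda>s1 s2. TT q x s1 s2 * mon a b c s1 s2) s2 s1)"
    unfolding BB_def by (rule II_swap[symmetric, OF TTm_tcont])
  also have "\<dots> = II (\<lambda>s1 s2. - (TT q x s1 s2 * mon b a c s1 s2))"
  proof (rule II_cong)
    fix s1 s2 :: complex assume "s1 \<in> sphere 0 1" "s2 \<in> sphere 0 1"
    hence nz: "s1 \<noteq> 0" "s2 \<noteq> 0" by auto
    show "TT q x s2 s1 * mon a b c s2 s1 = - (TT q x s1 s2 * mon b a c s1 s2)"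
      using TT_swap12[OF q1 q0 x0 nz] nz by (simp add: mon_nf)
  qed
  also have "\<dots> = - BB q x b a c" unfolding BB_def by (rule II_neg)
  finally show ?thesis .
qed

lemma BB_23: "BB q x a b c = - BB q x a c b"
proof -
  have "BB q x a b c = II (\<lambda>s1 s2. (\<lambda>s1 s2. TT q x s1 s2 * mon a b c s1 s2) s1 (inverse (s1 * s2)))"
    unfolding BB_def by (rule II_inv23[symmetric]) (rule TTm_holo, auto)
  also have "\<dots> = II (\<lambda>s1 s2. - (TT q x s1 s2 * mon a c b s1 s2))"
  proof (rule II_cong)
    fix s1 s2 :: complex assume "s1 \<in> sphere 0 1" "s2 \<in> sphere 0 1"
    hence nz: "s1 \<noteq> 0" "s2 \<noteq> 0" by auto
    have "inverse (s1 * s2) \<noteq> 0" using nz by simp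
    thus "TT q x s1 (inverse (s1 * s2)) * mon a b c s1 (inverse (s1 * s2)) = - (TT q x s1 s2 * mon a c b s1 s2)"
      using TT_swap23[OF q1 q0 x0 nz] nz
      by (simp add: mon_nf power_int_diff power_int_mult_distrib power_int_inverse field_simps)
  qed
  also have "\<dots> = - BB q x a c b" unfolding BB_def by (rule II_neg)
  finally show ?thesis .
qed

lemma BB_sh: "BB q x a b c = q powi (b - c - 4) * BB q x a (b - 4) (c + 4)"
proof -
  have "BB q x a b c = II (\<lambda>s1 s2. (\<lambda>s1 s2. TT q x s1 s2 * mon a b c s1 s2) s1 (q * s2))"
    unfolding BB_def by (rule II_scale[symmetric]) (rule TTm_holo, auto simp: q0)
  also have "\<dots> = II (\<lambda>s1 s2. q powi (b - c - 4) * (TT q x s1 s2 * mon a (b - 4) (c + 4) s1 s2))"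
  proof (rule II_cong)
    fix s1 s2 :: complex assume "s1 \<in> sphere 0 1" "s2 \<in> sphere 0 1"
    hence nz: "s1 \<noteq> 0" "s2 \<noteq> 0" by auto
    have qs: "q * s2 \<noteq> 0" using nz q0 by simp
    have e1: "q powi (b - c - 4) = q powi (b - c) / q ^ 4"
      using q0 by (simp add: power_int_diff)
    have e2: "s1 powi (a - (c + 4)) = s1 powi (a - c) / s1 ^ 4"
      using nz by (simp add: power_int_diff flip: diff_diff_eq)
    have e3: "s2 powi (b - 4 - (c + 4)) = s2 powi (b - c) / s2 ^ 8"
      using nz by (simp add: power_int_diff flip: diff_diff_eq)
    show "TT q x s1 (q * s2) * mon a b c s1 (q * s2) =
          q powi (b - c - 4) * (TT q x s1 s2 * mon a (b - 4) (c + 4) s1 s2)"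
      unfolding TT_shift[OF q1 q0 x0 nz] mon_nf[OF nz(1) qs] mon_nf[OF nz] e1 e2 e3
      using nz q0 by (simp add: power_int_mult_distrib field_simps)
  qed
  also have "\<dots> = q powi (b - c - 4) * BB q x a (b - 4) (c + 4)" unfolding BB_def by (rule II_cmul)
  finally show ?thesis .
qed

end

context
  fixes q x :: complex
  assumes q1: "norm q < 1" and q0: "q \<noteq> 0" and x0: "x \<noteq> 0"
begin

lemma mv23_nat: "BB q x a b c = q powi (int n * (b - c - 4) - 4 * int n * (int n - 1)) * BB q x a (b - 4 * int n) (c + 4 * int n)"
proof (induction n arbitrary: b c)
  case 0 then show ?case by simp
next
  case (Suc n)
  have "BB q x a b c = q powi (b - c - 4) * BB q x a (b - 4) (c + 4)"
    by (rule BB_sh[OF q1 q0 x0])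
  also have "BB q x a (b - 4) (c + 4) = q powi (int n * ((b - 4) - (c + 4) - 4) - 4 * int n * (int n - 1)) *
      BB q x a (b - 4 - 4 * int n) (c + 4 + 4 * int n)"
    by (rule Suc.IH)
  finally have "BB q x a b c = q powi (b - c - 4) * q powi (int n * ((b - 4) - (c + 4) - 4) - 4 * int n * (int n - 1)) *
      BB q x a (b - 4 - 4 * int n) (c + 4 + 4 * int n)" by simp
  also have "q powi (b - c - 4) * q powi (int n * ((b - 4) - (c + 4) - 4) - 4 * int n * (int n - 1)) =
      q powi (int (Suc n) * (b - c - 4) - 4 * int (Suc n) * (int (Suc n) - 1))"
    using q0 by (simp add: power_int_add[symmetric] algebra_simps)
  also have "b - 4 - 4 * int n = b - 4 * int (Suc n)" by simp
  also have "c + 4 + 4 * int n = c + 4 * int (Suc n)" by simp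
  finally show ?case .
qed

lemma mv23: "BB q x a b c = q powi (k * (b - c - 4) - 4 * k * (k - 1)) * BB q x a (b - 4 * k) (c + 4 * k)"
proof (cases "k \<ge> 0")
  case True
  define n where "n = nat k"
  have n: "k = int n" using True by (simp add: n_def)
  show ?thesis unfolding n by (rule mv23_nat)
next
  case False
  define n where "n = nat (- k)"
  have n: "k = - int n" using False by (simp add: n_def)
  have h: "BB q x a (b + 4 * int n) (c - 4 * int n) =
     q powi (int n * ((b + 4 * int n) - (c - 4 * int n) - 4) - 4 * int n * (int n - 1)) * BB q x a b c"
    using mv23_nat[of a "b + 4 * int n" "c - 4 * int n" n] by simp
  have e: "q powi (k * (b - c - 4) - 4 * k * (k - 1)) * q powi (int n * ((b + 4 * int n) - (c - 4 * int n) - 4) - 4 * int n * (int n - 1)) = 1"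
    unfolding n using q0 by (simp add: power_int_add[symmetric] algebra_simps)
  have "BB q x a (b - 4 * k) (c + 4 * k) = BB q x a (b + 4 * int n) (c - 4 * int n)" by (simp add: n)
  hence "q powi (k * (b - c - 4) - 4 * k * (k - 1)) * BB q x a (b - 4 * k) (c + 4 * k) =
     (q powi (k * (b - c - 4) - 4 * k * (k - 1)) * q powi (int n * ((b + 4 * int n) - (c - 4 * int n) - 4) - 4 * int n * (int n - 1))) * BB q x a b c"
    unfolding h by (simp add: mult.assoc)
  thus ?thesis unfolding e by simp
qed

lemma mv13: "BB q x a b c = q powi (k * (a - c - 4) - 4 * k * (k - 1)) * BB q x (a - 4 * k) b (c + 4 * k)"
  using BB_12[OF q1 q0 x0, of a b c] mv23[of b a c k] BB_12[OF q1 q0 x0, of b "a - 4 * k" "c + 4 * k"] by simp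

lemma mv12: "BB q x a b c = q powi (k * (a - b - 4) - 4 * k * (k - 1)) * BB q x (a - 4 * k) (b + 4 * k) c"
  using BB_23[OF q1 q0 x0, of a b c] mv13[of a c b k] BB_23[OF q1 q0 x0, of "a - 4 * k" c "b + 4 * k"] by simp

lemma mv23E: "b' = b - 4 * k \<Longrightarrow> c' = c + 4 * k \<Longrightarrow> e = k * (b - c - 4) - 4 * k * (k - 1) \<Longrightarrow>
    BB q x a b c = q powi e * BB q x a b' c'"
  using mv23 by simp
lemma mv13E: "a' = a - 4 * k \<Longrightarrow> c' = c + 4 * k \<Longrightarrow> e = k * (a - c - 4) - 4 * k * (k - 1) \<Longrightarrow>
    BB q x a b c = q powi e * BB q x a' b c'"
  using mv13 by simp
lemma mv12E: "a' = a - 4 * k \<Longrightarrow> b' = b + 4 * k \<Longrightarrow> e = k * (a - b - 4) - 4 * k * (k - 1) \<Longrightarrow>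
    BB q x a b c = q powi e * BB q x a' b' c"
  using mv12 by simp

lemma BB_z12: "BB q x a a c = 0" using BB_12[OF q1 q0 x0, of a a c] by simp
lemma BB_z23: "BB q x a b b = 0" using BB_23[OF q1 q0 x0, of a b b] by simp
lemma BB_z13: "BB q x a b a = 0" using BB_12[OF q1 q0 x0, of a b a] BB_z23[of b a] by simp
lemma BB_c1: "BB q x a b c = BB q x b c a"
  using BB_12[OF q1 q0 x0, of a b c] BB_23[OF q1 q0 x0, of b a c] by simp
lemma BB_c2: "BB q x a b c = BB q x c a b"
  using BB_c1[of a b c] BB_c1[of b c a] by simp
lemma BB_13: "BB q x a b c = - BB q x c b a"
  using BB_12[OF q1 q0 x0, of a b c] BB_c1[of c b a] by simp

end

lemma prod3: fixes f :: "nat \<Rightarrow> complex" shows "(\<Prod>i<3. f i) = f 0 * f 1 * f 2"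
  by (simp add: eval_nat_numeral ac_simps)

lemma prod_pairs3:
  fixes f :: "nat \<Rightarrow> nat \<Rightarrow> complex"
  shows "(\<Prod>i<3. \<Prod>j\<in>{..<3} - {i}. f i j) = (f 0 1 * f 1 0) * (f 0 2 * f 2 0) * (f 1 2 * f 2 1)"
proof -
  have e0: "{..<3::nat} - {0} = {1,2}" and e1: "{..<3::nat} - {1} = {0,2}" and e2: "{..<3::nat} - {2} = {0,1}"
    by auto
  show ?thesis unfolding prod3 e0 e1 e2 by (simp add: ac_simps)
qed

lemma sum3: fixes f :: "nat \<Rightarrow> complex" shows "(\<Sum>i<3. f i) = f 0 + f 1 + f 2"
  by (simp add: eval_nat_numeral ac_simps)

definition LL :: "int \<Rightarrow> (complex \<times> int \<times> int \<times> int) list" where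
  "LL m = [(1, m+2,1,0), (-1, m+2,0,1), (-1, m+1,2,0), (1, m,2,1), (1, m+1,0,2), (-1, m,1,2),
       (1, 2,m+1,0), (-1, 2,m,1), (-1, 1,m+2,0), (1, 0,m+2,1), (1, 1,m,2), (-1, 0,m+1,2),
       (1, 2,1,m), (-1, 2,0,m+1), (-1, 1,2,m), (1, 0,2,m+1), (1, 1,0,m+2), (-1, 0,1,m+2)]"

context
  fixes q x :: complex
  assumes q1: "norm q < 1" and q0: "q \<noteq> 0" and x0: "x \<noteq> 0"
begin

lemma vp: "z \<noteq> 0 \<Longrightarrow> w = inverse z \<Longrightarrow> qpoch z q * qpoch w q = (1 - w) * th q z"
proof -
  assume z: "z \<noteq> 0" and w: "w = inverse z"
  have "w * q = q / z" using w by (simp add: divide_inverse mult.commute)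
  hence "qpoch w q = (1 - w) * qpoch (q / z) q" using qpoch_rec[OF q1, of w] by simp
  thus ?thesis unfolding th_def by (simp add: ac_simps)
qed

lemma mp: "s \<noteq> 0 \<Longrightarrow> qpoch (csqrt q * s * x) q * qpoch (csqrt q * inverse s * inverse x) q = th q (csqrt q * s * x)"
proof -
  assume s: "s \<noteq> 0"
  have h: "csqrt q * csqrt q = q" using power2_csqrt[of q] by (simp add: power2_eq_square)
  have h0: "csqrt q \<noteq> 0" using q0 by simp
  have "csqrt q * csqrt q / (csqrt q * s * x) = csqrt q * inverse s * inverse x"
    using s x0 h0 by (simp add: field_simps)
  hence "q / (csqrt q * s * x) = csqrt q * inverse s * inverse x" by (simp only: h)
  thus ?thesis unfolding th_def by simp
qed

lemma integrand_eq:
  assumes nz: "s1 \<noteq> 0" "s2 \<noteq> 0"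
  shows "su3_integrand m x q s1 s2 = TT q x s1 s2 *
    ((s1 - s2) * (s1 - inverse (s1 * s2)) * (s2 - inverse (s1 * s2)) *
     (s1 powi m + s2 powi m + inverse (s1 * s2) powi m))"
proof -
  have s3: "inverse (s1 * s2) \<noteq> 0" using nz by simp
  have v1: "qpoch (s1 / s2) q * qpoch (s2 / s1) q = (1 - s2 / s1) * th q (s1 / s2)"
    by (rule vp) (use nz in auto)
  have v2: "qpoch (s1 / inverse (s1 * s2)) q * qpoch (inverse (s1 * s2) / s1) q =
      (1 - inverse (s1 * s2) / s1) * th q (s1 * (s1 * s2))"
    using vp[of "s1 * (s1 * s2)" "inverse (s1 * s2) / s1"] nz by (simp add: field_simps)
  have v3: "qpoch (s2 / inverse (s1 * s2)) q * qpoch (inverse (s1 * s2) / s2) q =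
      (1 - inverse (s1 * s2) / s2) * th q (s2 * (s1 * s2))"
    using vp[of "s2 * (s1 * s2)" "inverse (s1 * s2) / s2"] nz by (simp add: field_simps)
  have sv: "svar s1 s2 0 = s1" "svar s1 s2 1 = s2" "svar s1 s2 2 = inverse (s1 * s2)"
    by (simp_all add: svar_def)
  have I: "su3_integrand m x q s1 s2 =
    (qpoch (s1 / s2) q * qpoch (s2 / s1) q) *
    (qpoch (s1 / inverse (s1 * s2)) q * qpoch (inverse (s1 * s2) / s1) q) *
    (qpoch (s2 / inverse (s1 * s2)) q * qpoch (inverse (s1 * s2) / s2) q) *
    ((qpoch (csqrt q * s1 * x) q * qpoch (csqrt q * inverse s1 * inverse x) q) *
     (qpoch (csqrt q * s2 * x) q * qpoch (csqrt q * inverse s2 * inverse x) q) *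
     (qpoch (csqrt q * inverse (s1 * s2) * x) q * qpoch (csqrt q * inverse (inverse (s1 * s2)) * inverse x) q)) *
    (s1 powi m + s2 powi m + inverse (s1 * s2) powi m)"
    unfolding su3_integrand_def Let_def prod_pairs3 prod3 sum3 sv ..
  have alg: "\<And>A B C D E F P. (1 - s2 / s1) * A * ((1 - inverse (s1 * s2) / s1) * B) *
      ((1 - inverse (s1 * s2) / s2) * C) * (D * E * F) * P =
      A * B * C * D * E * F / (s1^2 * s2) *
      ((s1 - s2) * (s1 - inverse (s1 * s2)) * (s2 - inverse (s1 * s2)) * P)"
    using nz by (simp add: field_simps power2_eq_square)
  show ?thesis
    unfolding I v1 v2 v3 mp[OF nz(1)] mp[OF nz(2)] mp[OF s3] TT_def alg ..
qed

lemma powi_add2: "s \<noteq> 0 \<Longrightarrow> (s::complex) powi (m + 2) = s powi m * s * s"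
  by (simp add: power_int_add power2_eq_square)
lemma powi_add1: "s \<noteq> 0 \<Longrightarrow> (s::complex) powi (m + 1) = s powi m * s"
  by (simp add: power_int_add)

lemma poly_expand:
  assumes nz: "s1 \<noteq> 0" "s2 \<noteq> 0"
  shows "(s1 - s2) * (s1 - inverse (s1 * s2)) * (s2 - inverse (s1 * s2)) *
     (s1 powi m + s2 powi m + inverse (s1 * s2) powi m) =
     (\<Sum>t\<leftarrow>LL m. fst t * mon (fst (snd t)) (fst (snd (snd t))) (snd (snd (snd t))) s1 s2)"
proof -
  have s3: "inverse (s1 * s2) \<noteq> 0" using nz by simp
  show ?thesis
    unfolding LL_def mon_def
    by (simp add: powi_add2 powi_add1 nz s3 power2_eq_square del: inverse_mult_distrib) (simp add: algebra_simps)
qed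

lemma sum_list_cmul_gen: "(c::complex) * (\<Sum>t\<leftarrow>L. fst t * f t) = (\<Sum>t\<leftarrow>L. fst t * (c * f t))"
  by (induction L) (simp_all add: algebra_simps)

definition Wt :: "int \<Rightarrow> complex" where
  "Wt m = BB q x (m + 2) 1 0 + BB q x 2 (m + 1) 0 + BB q x 2 1 m"

lemma II_integrand: "II (su3_integrand m x q) = (\<Sum>t\<leftarrow>LL m. fst t * BB q x (fst (snd t)) (fst (snd (snd t))) (snd (snd (snd t))))"
proof -
  define G where "G t s1 s2 = fst t * (TT q x s1 s2 * mon (fst (snd t)) (fst (snd (snd t))) (snd (snd (snd t))) s1 s2)"
    for t :: "complex \<times> int \<times> int \<times> int" and s1 s2
  have "II (su3_integrand m x q) = II (\<lambda>s1 s2. \<Sum>t\<leftarrow>LL m. G t s1 s2)"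
  proof (rule II_cong)
    fix s1 s2 :: complex assume "s1 \<in> sphere 0 1" "s2 \<in> sphere 0 1"
    hence nz: "s1 \<noteq> 0" "s2 \<noteq> 0" by auto
    show "su3_integrand m x q s1 s2 = (\<Sum>t\<leftarrow>LL m. G t s1 s2)"
      unfolding integrand_eq[OF nz] poly_expand[OF nz] sum_list_cmul_gen G_def ..
  qed
  also have "\<dots> = (\<Sum>t\<leftarrow>LL m. II (G t))"
  proof (rule II_list, safe)
    fix t assume "t \<in> set (LL m)"
    have "tcont (\<lambda>s1 s2. TT q x s1 s2 * mon (fst (snd t)) (fst (snd (snd t))) (snd (snd (snd t))) s1 s2)"
      by (rule TTm_tcont[OF q1 q0 x0])
    thus "tcont (G t)" unfolding G_def tcont_def by (rule continuous_on_mult[OF continuous_on_const])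
  qed
  also have "\<dots> = (\<Sum>t\<leftarrow>LL m. fst t * BB q x (fst (snd t)) (fst (snd (snd t))) (snd (snd (snd t))))"
    unfolding G_def BB_def II_cmul ..
  finally show ?thesis .
qed

lemma W_eq: "W_SU3 m x q = (qpoch q q)^2 * Wt m"
proof -
  have f3: "fact 3 = (6::complex)" by (simp add: eval_nat_numeral)
  have W1: "W_SU3 m x q = (qpoch q q)^2 / fact 3 * II (su3_integrand m x q)"
    by (simp add: W_SU3_def II_def)
  have "(\<Sum>t\<leftarrow>LL m. fst t * BB q x (fst (snd t)) (fst (snd (snd t))) (snd (snd (snd t))))
    = 6 * Wt m"
  proof -
    have r: "BB q x (m+2) 0 1 = - BB q x (m+2) 1 0"
      "BB q x (m+1) 2 0 = - BB q x 2 (m+1) 0"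
      "BB q x m 2 1 = BB q x 2 1 m"
      "BB q x (m+1) 0 2 = BB q x 2 (m+1) 0"
      "BB q x m 1 2 = - BB q x 2 1 m"
      "BB q x 2 m 1 = - BB q x 2 1 m"
      "BB q x 1 (m+2) 0 = - BB q x (m+2) 1 0"
      "BB q x 0 (m+2) 1 = BB q x (m+2) 1 0"
      "BB q x 1 m 2 = BB q x 2 1 m"
      "BB q x 0 (m+1) 2 = - BB q x 2 (m+1) 0"
      "BB q x 2 0 (m+1) = - BB q x 2 (m+1) 0"
      "BB q x 1 2 m = - BB q x 2 1 m"
      "BB q x 0 2 (m+1) = BB q x 2 (m+1) 0"
      "BB q x 1 0 (m+2) = BB q x (m+2) 1 0"
      "BB q x 0 1 (m+2) = - BB q x (m+2) 1 0"
      using BB_23[OF q1 q0 x0, of "m+2" 0 1] BB_12[OF q1 q0 x0, of "m+1" 2 0]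
        BB_c1[OF q1 q0 x0, of m 2 1] BB_c2[OF q1 q0 x0, of "m+1" 0 2] BB_13[OF q1 q0 x0, of m 1 2]
        BB_23[OF q1 q0 x0, of 2 m 1] BB_12[OF q1 q0 x0, of 1 "m+2" 0] BB_c2[OF q1 q0 x0, of "m+2" 1 0]
        BB_c1[OF q1 q0 x0, of 2 1 m] BB_13[OF q1 q0 x0, of 0 "m+1" 2] BB_23[OF q1 q0 x0, of 2 0 "m+1"]
        BB_12[OF q1 q0 x0, of 1 2 m] BB_c2[OF q1 q0 x0, of 2 "m+1" 0] BB_c1[OF q1 q0 x0, of "m+2" 1 0] BB_13[OF q1 q0 x0, of 0 1 "m+2"]
      by (simp_all add: algebra_simps)
    show ?thesis unfolding LL_def Wt_def by (simp add: r; simp add: algebra_simps)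
  qed
  thus ?thesis unfolding W1 II_integrand f3 by simp
qed

end

context
  fixes q x :: complex
  assumes q1: "norm q < 1" and q0: "q \<noteq> 0" and x0: "x \<noteq> 0"
begin

lemmas m13 = mv13E[OF q1 q0 x0] and m23 = mv23E[OF q1 q0 x0] and m12 = mv12E[OF q1 q0 x0]
lemmas c1 = BB_c1[OF q1 q0 x0] and c2 = BB_c2[OF q1 q0 x0] and p12 = BB_12[OF q1 q0 x0]
   and p23 = BB_23[OF q1 q0 x0] and p13 = BB_13[OF q1 q0 x0] and bN = BB_N[OF q1 q0 x0]

lemma pa: "q powi (a + b) = q powi a * q powi b" using q0 by (simp add: power_int_add)

lemma zA: "BB q x (4*\<alpha>+5) 1 0 = 0"
proof -
  have "BB q x (4*\<alpha>+5) 1 0 = q powi 0 * BB q x 1 (4*\<alpha>+5) 0"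
    by (rule m12[where k="\<alpha>+1"]) (simp_all add: algebra_simps)
  thus ?thesis using p12[of "4*\<alpha>+5" 1 0] by simp
qed

lemma zB: "BB q x 2 (4*\<alpha>+4) 0 = 0"
proof -
  have "BB q x 2 (4*\<alpha>+4) 0 = q powi 0 * BB q x 2 0 (4*\<alpha>+4)"
    by (rule m23[where k="\<alpha>+1"]) (simp_all add: algebra_simps)
  thus ?thesis using p23[of 2 "4*\<alpha>+4" 0] by simp
qed

lemma zC: "BB q x (4*\<alpha>+4) 1 0 = 0"
proof -
  have "BB q x (4*\<alpha>+4) 1 0 = q powi 0 * BB q x 0 1 (4*\<alpha>+4)"
    by (rule m13[where k="\<alpha>+1"]) (simp_all add: algebra_simps)
  thus ?thesis using p12[of 0 1 "4*\<alpha>+4"] c1[of "4*\<alpha>+4" 1 0] by simp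
qed

lemma case0: "Wt q x (4*\<alpha>+3) = BB q x (4*\<alpha>+2) 1 0"
  and case0b: "Wt q x (4*\<alpha>) = (1 + q powi (-\<alpha>) + q powi (-2*\<alpha>)) * BB q x (4*\<alpha>+2) 1 0"
proof -
  have "Wt q x (4*\<alpha>+3) = BB q x (4*\<alpha>+5) 1 0 + BB q x 2 (4*\<alpha>+4) 0 + BB q x 2 1 (4*\<alpha>+3)"
    unfolding Wt_def[OF q1 q0 x0] by (simp add: add.assoc)
  also have "BB q x 2 1 (4*\<alpha>+3) = BB q x 1 0 (4*\<alpha>+2)"
    using bN[of 1 0 "4*\<alpha>+2"] by (simp add: add.assoc)
  also have "\<dots> = BB q x (4*\<alpha>+2) 1 0" by (rule c2)
  finally show "Wt q x (4*\<alpha>+3) = BB q x (4*\<alpha>+2) 1 0" by (simp add: zA zB)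
next
  have "Wt q x (4*\<alpha>) = BB q x (4*\<alpha>+2) 1 0 + BB q x 2 (4*\<alpha>+1) 0 + BB q x 2 1 (4*\<alpha>)"
    unfolding Wt_def[OF q1 q0 x0] by simp
  also have "BB q x 2 (4*\<alpha>+1) 0 = q powi (-\<alpha>) * BB q x (4*\<alpha>+2) 1 0"
    by (rule m12[where k="-\<alpha>"]) (simp_all add: algebra_simps)
  also have "BB q x 2 1 (4*\<alpha>) = q powi (-2*\<alpha>) * BB q x (4*\<alpha>+2) 1 0"
    by (rule m13[where k="-\<alpha>"]) (simp_all add: algebra_simps)
  finally show "Wt q x (4*\<alpha>) = (1 + q powi (-\<alpha>) + q powi (-2*\<alpha>)) * BB q x (4*\<alpha>+2) 1 0"
    by (simp add: algebra_simps)
qed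

lemma case1: "Wt q x (4*\<alpha>+4) = (1 + q powi (\<alpha>+1) + q powi (2*\<alpha>+2)) * Wt q x (4*\<alpha>+1)"
proof -
  define X where "X = BB q x 3 1 (4*\<alpha>)"
  have X': "BB q x 1 (4*\<alpha>) 3 = X" unfolding X_def by (rule c1[symmetric])
  have a1: "BB q x (4*\<alpha>+3) 1 0 = q powi (3*\<alpha>) * X"
    unfolding X_def by (rule m13[where k="\<alpha>"]) (simp_all add: algebra_simps)
  have a2: "BB q x 2 (4*\<alpha>+2) 0 = 0"
  proof -
    have "BB q x 2 (4*\<alpha>+2) 0 = q powi (2*\<alpha>) * BB q x 2 2 (4*\<alpha>)"
      by (rule m23[where k="\<alpha>"]) (simp_all add: algebra_simps)
    thus ?thesis using BB_z12[OF q1 q0 x0, of 2 "4*\<alpha>"] by simp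
  qed
  have a3: "BB q x 2 1 (4*\<alpha>+1) = 0"
  proof -
    have "BB q x 2 1 (4*\<alpha>+1) = q powi (-\<alpha>) * BB q x (4*\<alpha>+2) 1 1"
      by (rule m13[where k="-\<alpha>"]) (simp_all add: algebra_simps)
    thus ?thesis using BB_z23[OF q1 q0 x0, of "4*\<alpha>+2" 1] by simp
  qed
  have W1: "Wt q x (4*\<alpha>+1) = q powi (3*\<alpha>) * X"
    unfolding Wt_def[OF q1 q0 x0] by (simp add: add.assoc a1 a2 a3)
  have b1: "BB q x (4*\<alpha>+6) 1 0 = q powi (2*\<alpha>+2) * q powi (3*\<alpha>) * X"
  proof -
    have "BB q x (4*\<alpha>+6) 1 0 = BB q x (4*\<alpha>+5) 0 (-1)"
      using bN[of "4*\<alpha>+5" 0 "-1"] by (simp add: add.assoc)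
    also have "\<dots> = q powi (2*\<alpha>+2) * BB q x 1 0 (4*\<alpha>+3)"
      by (rule m13[where k="\<alpha>+1"]) (simp_all add: algebra_simps)
    also have "BB q x 1 0 (4*\<alpha>+3) = q powi (3*\<alpha>) * BB q x 1 (4*\<alpha>) 3"
      by (rule m23[where k="-\<alpha>"]) (simp_all add: algebra_simps)
    finally show ?thesis unfolding X' by (simp add: mult.assoc)
  qed
  have b2: "BB q x 2 (4*\<alpha>+5) 0 = q powi (4*\<alpha>+1) * X"
  proof -
    have "BB q x 2 (4*\<alpha>+5) 0 = BB q x 1 (4*\<alpha>+4) (-1)"
      using bN[of 1 "4*\<alpha>+4" "-1"] by (simp add: add.assoc)
    also have "\<dots> = q powi (4*\<alpha>+1) * BB q x 1 (4*\<alpha>) 3"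
      by (rule m23[where k=1]) (simp_all add: algebra_simps)
    finally show ?thesis unfolding X' .
  qed
  have b3: "BB q x 2 1 (4*\<alpha>+4) = q powi (3*\<alpha>) * X"
  proof -
    have "BB q x 2 1 (4*\<alpha>+4) = BB q x 1 0 (4*\<alpha>+3)"
      using bN[of 1 0 "4*\<alpha>+3"] by (simp add: add.assoc)
    also have "\<dots> = q powi (3*\<alpha>) * BB q x 1 (4*\<alpha>) 3"
      by (rule m23[where k="-\<alpha>"]) (simp_all add: algebra_simps)
    finally show ?thesis unfolding X' .
  qed
  have W2: "Wt q x (4*\<alpha>+4) = q powi (2*\<alpha>+2) * q powi (3*\<alpha>) * X + q powi (4*\<alpha>+1) * X + q powi (3*\<alpha>) * X"
    unfolding Wt_def[OF q1 q0 x0] by (simp add: add.assoc b1 b2 b3)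
  have e: "q powi (4*\<alpha>+1) = q powi (\<alpha>+1) * q powi (3*\<alpha>)"
    unfolding pa[symmetric] by (simp add: algebra_simps)
  show ?thesis unfolding W1 W2 e by (simp add: algebra_simps)
qed

lemma case2: "Wt q x (4*\<alpha>+5) = - (q powi (3*\<alpha>+3)) * Wt q x (4*\<alpha>+2)"
proof -
  have a3: "BB q x 2 1 (4*\<alpha>+2) = 0"
  proof -
    have "BB q x 2 1 (4*\<alpha>+2) = q powi 0 * BB q x (4*\<alpha>+2) 1 2"
      by (rule m13[where k="-\<alpha>"]) (simp_all add: algebra_simps)
    thus ?thesis using p13[of 2 1 "4*\<alpha>+2"] by simp
  qed
  have W1: "Wt q x (4*\<alpha>+2) = BB q x 2 (4*\<alpha>+3) 0"
    unfolding Wt_def[OF q1 q0 x0] using zC[of \<alpha>] a3 by (simp add: add.assoc)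
  have b1: "BB q x (4*\<alpha>+7) 1 0 = - (q powi (3*\<alpha>+3)) * BB q x 2 (4*\<alpha>+3) 0"
  proof -
    have "BB q x (4*\<alpha>+7) 1 0 = BB q x (4*\<alpha>+6) 0 (-1)"
      using bN[of "4*\<alpha>+6" 0 "-1"] by (simp add: add.assoc)
    also have "\<dots> = q powi (3*\<alpha>+3) * BB q x 2 0 (4*\<alpha>+3)"
      by (rule m13[where k="\<alpha>+1"]) (simp_all add: algebra_simps)
    finally show ?thesis using p23[of 2 0 "4*\<alpha>+3"] by simp
  qed
  have b2: "BB q x 2 (4*\<alpha>+6) 0 = 0"
  proof -
    have h1: "BB q x 2 (4*\<alpha>+6) 0 = BB q x 1 (4*\<alpha>+5) (-1)"
      using bN[of 1 "4*\<alpha>+5" "-1"] by (simp add: add.assoc)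
    have h2: "BB q x 1 (4*\<alpha>+5) (-1) = q powi 0 * BB q x (4*\<alpha>+5) 1 (-1)"
      by (rule m12[where k="-(\<alpha>+1)"]) (simp_all add: algebra_simps)
    have h3: "BB q x 1 (4*\<alpha>+5) (-1) = - BB q x (4*\<alpha>+5) 1 (-1)" by (rule p12)
    have "BB q x (4*\<alpha>+5) 1 (-1) = 0" using h2 h3 by simp
    thus ?thesis using h1 h2 by simp
  qed
  have b3: "BB q x 2 1 (4*\<alpha>+5) = 0"
  proof -
    have "BB q x 2 1 (4*\<alpha>+5) = BB q x 1 0 (4*\<alpha>+4)"
      using bN[of 1 0 "4*\<alpha>+4"] by (simp add: add.assoc)
    also have "\<dots> = BB q x (4*\<alpha>+4) 1 0" by (rule c2)
    finally show ?thesis using zC[of \<alpha>] by simp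
  qed
  show ?thesis unfolding W1 Wt_def[OF q1 q0 x0] by (simp add: add.assoc b1 b2 b3 zC a3)
qed

lemma case3: "Wt q x (4*\<alpha>+6) = - (q powi (3*\<alpha>+3)) * Wt q x (4*\<alpha>+3)"
proof -
  have W1: "Wt q x (4*\<alpha>+3) = BB q x 2 1 (4*\<alpha>+3)"
    unfolding Wt_def[OF q1 q0 x0] using zA[of \<alpha>] zB[of \<alpha>] by (simp add: add.assoc)
  have b1: "BB q x (4*\<alpha>+8) 1 0 = 0"
  proof -
    have h1: "BB q x (4*\<alpha>+8) 1 0 = BB q x (4*\<alpha>+7) 0 (-1)"
      using bN[of "4*\<alpha>+7" 0 "-1"] by (simp add: add.assoc)
    have h2: "BB q x (4*\<alpha>+7) 0 (-1) = q powi 0 * BB q x (-1) 0 (4*\<alpha>+7)"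
      by (rule m13[where k="\<alpha>+2"]) (simp_all add: algebra_simps)
    have h3: "BB q x (4*\<alpha>+7) 0 (-1) = - BB q x (-1) 0 (4*\<alpha>+7)" by (rule p13)
    have "BB q x (-1) 0 (4*\<alpha>+7) = 0" using h2 h3 by simp
    thus ?thesis using h1 h2 by simp
  qed
  have b2: "BB q x 2 (4*\<alpha>+7) 0 = - (q powi (3*\<alpha>+3)) * BB q x 2 1 (4*\<alpha>+3)"
  proof -
    have "BB q x 2 (4*\<alpha>+7) 0 = BB q x 1 (4*\<alpha>+6) (-1)"
      using bN[of 1 "4*\<alpha>+6" "-1"] by (simp add: add.assoc)
    also have "\<dots> = q powi (3*\<alpha>+3) * BB q x 1 2 (4*\<alpha>+3)"
      by (rule m23[where k="\<alpha>+1"]) (simp_all add: algebra_simps)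
    finally show ?thesis using p12[of 1 2 "4*\<alpha>+3"] by simp
  qed
  have b3: "BB q x 2 1 (4*\<alpha>+6) = 0"
  proof -
    have h1: "BB q x 2 1 (4*\<alpha>+6) = BB q x 1 0 (4*\<alpha>+5)"
      using bN[of 1 0 "4*\<alpha>+5"] by (simp add: add.assoc)
    have h2: "BB q x 1 0 (4*\<alpha>+5) = q powi 0 * BB q x (4*\<alpha>+5) 0 1"
      by (rule m13[where k="-(\<alpha>+1)"]) (simp_all add: algebra_simps)
    have h3: "BB q x 1 0 (4*\<alpha>+5) = - BB q x (4*\<alpha>+5) 0 1" by (rule p13)
    have "BB q x (4*\<alpha>+5) 0 1 = 0" using h2 h3 by simp
    thus ?thesis using h1 h2 by simp
  qed
  show ?thesis unfolding W1 Wt_def[OF q1 q0 x0] by (simp add: add.assoc b1 b2 b3 zA zB)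
qed

end

lemma denom_nz:
  fixes q :: complex and a :: int
  assumes q1: "norm q < 1" and q0: "q \<noteq> 0"
  shows "1 + q powi a + q powi (- a) \<noteq> 0"
proof
  assume h: "1 + q powi a + q powi (- a) = 0"
  define w where "w = q powi a"
  have w0: "w \<noteq> 0" using q0 by (simp add: w_def)
  have "1 + w + inverse w = 0" using h by (simp add: w_def power_int_minus)
  moreover have "w * w + w + 1 = w * (1 + w + inverse w)" using w0 by (simp add: algebra_simps)
  ultimately have "w * w + w + 1 = 0" by simp
  hence "w ^ 3 = 1"
  proof -
    assume "w * w + w + 1 = 0"
    hence "(w - 1) * (w * w + w + 1) = 0" by simp
    thus "w ^ 3 = 1" by (simp add: algebra_simps eval_nat_numeral)
  qed
  hence n3: "norm w ^ 3 = 1" by (metis norm_one norm_power)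
  have nw: "norm w = 1"
  proof (rule ccontr)
    assume "norm w \<noteq> 1"
    hence "norm w < 1 \<or> norm w > 1" by linarith
    thus False
    proof
      assume "norm w < 1"
      hence "norm w ^ 3 < 1" by (simp add: power_less_one_iff)
      thus False using n3 by simp
    next
      assume "norm w > 1"
      hence "norm w ^ 3 > 1" by (simp add: one_less_power)
      thus False using n3 by simp
    qed
  qed
  have r: "norm w = norm q powi a" by (simp add: w_def norm_power_int)
  have rq: "0 < norm q" "norm q < 1" using q0 q1 by auto
  show False
  proof (cases "a = 0")
    case True thus False using h by simp
  next
    case False
    show False
    proof (cases "a > 0")
      case True
      hence "norm q powi a = norm q ^ nat a" by (simp add: power_int_def)
      also have "\<dots> < 1" using rq True by (simp add: power_less_one_iff)
      finally show False using nw r by simp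
    next
      case False2: False
      hence "a < 0" using False by simp
      hence "norm q powi a = inverse (norm q ^ nat (- a))" by (simp add: power_int_def power_inverse)
      moreover have "norm q ^ nat (- a) < 1" using rq \<open>a < 0\<close> by (simp add: power_less_one_iff)
      moreover have "norm q ^ nat (- a) > 0" using rq by simp
      ultimately have "norm q powi a > 1" by (simp add: one_less_inverse)
      thus False using nw r by simp
    qed
  qed
qed

theorem corollary3p12:
  fixes x q :: complex and \<alpha> m :: int
  assumes "norm q < 1" and "q \<noteq> 0" and "x \<noteq> 0"
  shows "(m = 4 * \<alpha> \<longrightarrow>
            W_SU3 (m + 3) x q =
              q powi (m div 4) / (1 + q powi (m div 4) + q powi (- (m div 4))) * W_SU3 m x q)
       \<and> (m = 4 * \<alpha> + 1 \<longrightarrow>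
            W_SU3 (m + 3) x q =
              (1 + q powi ((m + 3) div 4) + q powi ((2 * m + 6) div 4)) * W_SU3 m x q)
       \<and> (m = 4 * \<alpha> + 2 \<longrightarrow>
            W_SU3 (m + 3) x q = - (q powi ((3 * m + 6) div 4)) * W_SU3 m x q)
       \<and> (m = 4 * \<alpha> + 3 \<longrightarrow>
            W_SU3 (m + 3) x q = - (q powi ((3 * m + 3) div 4)) * W_SU3 m x q)"
proof (intro conjI impI)
  note q1 = assms(1) and q0 = assms(2) and x0 = assms(3)
  note W = W_eq[OF q1 q0 x0]
  have pa: "\<And>a b. q powi (a + b) = q powi a * q powi b" using q0 by (simp add: power_int_add)
  {
    assume m: "m = 4 * \<alpha>"
    have d: "m div 4 = \<alpha>" "m + 3 = 4 * \<alpha> + 3" using m by simp_all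
    define Y where "Y = BB q x (4*\<alpha>+2) 1 0"
    have A: "W_SU3 (m + 3) x q = (qpoch q q)^2 * Y"
      unfolding W d case0[OF q1 q0 x0] Y_def ..
    have B: "W_SU3 m x q = (qpoch q q)^2 * ((1 + q powi (-\<alpha>) + q powi (-2*\<alpha>)) * Y)"
      unfolding W m case0b[OF q1 q0 x0] Y_def ..
    have e: "q powi \<alpha> * (1 + q powi (-\<alpha>) + q powi (-2*\<alpha>)) = 1 + q powi \<alpha> + q powi (- \<alpha>)"
    proof -
      have "q powi \<alpha> * q powi (-\<alpha>) = 1" using pa[of \<alpha> "-\<alpha>"] by simp
      moreover have "q powi \<alpha> * q powi (-2*\<alpha>) = q powi (-\<alpha>)" using pa[of \<alpha> "-2*\<alpha>"] by simp
      ultimately show ?thesis by (simp add: algebra_simps)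
    qed
    have dn: "1 + q powi \<alpha> + q powi (- \<alpha>) \<noteq> 0" by (rule denom_nz[OF q1 q0])
    show "W_SU3 (m + 3) x q =
        q powi (m div 4) / (1 + q powi (m div 4) + q powi (- (m div 4))) * W_SU3 m x q"
      unfolding A B d(1)
    proof -
      have "q powi \<alpha> / (1 + q powi \<alpha> + q powi - \<alpha>) * ((qpoch q q)\<^sup>2 * ((1 + q powi - \<alpha> + q powi (- 2 * \<alpha>)) * Y))
          = (q powi \<alpha> * (1 + q powi - \<alpha> + q powi (- 2 * \<alpha>))) / (1 + q powi \<alpha> + q powi - \<alpha>) * ((qpoch q q)\<^sup>2 * Y)"
        by (simp add: field_simps)
      also have "\<dots> = (qpoch q q)\<^sup>2 * Y" unfolding e using dn by simp
      finally show "(qpoch q q)\<^sup>2 * Y = q powi \<alpha> / (1 + q powi \<alpha> + q powi - \<alpha>) * ((qpoch q q)\<^sup>2 * ((1 + q powi - \<alpha> + q powi (- 2 * \<alpha>)) * Y))"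
        by simp
    qed
  }
  {
    assume m: "m = 4 * \<alpha> + 1"
    have d: "(m + 3) div 4 = \<alpha> + 1" "(2 * m + 6) div 4 = 2 * \<alpha> + 2" "m + 3 = 4 * \<alpha> + 4" using m by simp_all
    show "W_SU3 (m + 3) x q = (1 + q powi ((m + 3) div 4) + q powi ((2 * m + 6) div 4)) * W_SU3 m x q"
      unfolding d W unfolding m case1[OF q1 q0 x0] by simp
  }
  {
    assume m: "m = 4 * \<alpha> + 2"
    have d: "(3 * m + 6) div 4 = 3 * \<alpha> + 3" "m + 3 = 4 * \<alpha> + 5" using m by simp_all
    show "W_SU3 (m + 3) x q = - (q powi ((3 * m + 6) div 4)) * W_SU3 m x q"
      unfolding d W unfolding m case2[OF q1 q0 x0] by simp
  }
  {
    assume m: "m = 4 * \<alpha> + 3"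
    have d: "(3 * m + 3) div 4 = 3 * \<alpha> + 3" "m + 3 = 4 * \<alpha> + 6" using m by simp_all
    show "W_SU3 (m + 3) x q = - (q powi ((3 * m + 3) div 4)) * W_SU3 m x q"
      unfolding d W unfolding m case3[OF q1 q0 x0] by simp
  }
qed


end
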